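(* Let $\mathcal{P}\subset\mathbb{Q}^n$ be a finite point set whose position vectors span $\mathbb{R}^n$, and let $\mathbb{R}^n=W_1\oplus\cdots\oplus W_r$ be a decomposition into pairwise orthogonal subspaces. For $\ell\in[r]$ let $\mathrm{proj}_\ell$ denote orthogonal projection onto $W_\ell$ and $\mathcal{P}_\ell=\mathrm{proj}_\ell(\mathcal{P})$. Let $\pi$ be a permutation of $\mathcal{P}$. Then $\pi$ is a geometric automorphism of $\mathcal{P}$ such that $A_\pi(W_\ell)=W_\ell$ for each $\ell\in[r]$ if and only if $\pi$ is an induced geometric automorphism of each $\mathcal{P}_\ell$, $1\le\ell\le r$.
   Context: A geometric automorphism of a finite point set $\mathcal{Q}$ (in a Euclidean space) is a permutation $\sigma$ of $\mathcal{Q}$ with $\|q\|=\|\sigma(q)\|$ and $\|q-q'\|=\|\sigma(q)-\sigma(q')\|$ for all $q,q'\in\mathcal{Q}$. For $\mathcal{P}$ spanning $\mathbb{R}^n$ and $\pi$ a geometric automorphism of $\mathcal{P}$, $A_\pi$ is the unique orthogonal matrix with $A_\pi p=\pi(p)$ for all $p\in\mathcal{P}$. A subset $\Delta\subseteq\mathcal{P}$ is an $(\ell)$-equivalence class if $\Delta=\mathrm{proj}_\ell^{-1}(q)\cap\mathcal{P}$ for some $q\in\mathcal{P}_\ell$. A permutation $\pi$ of $\mathcal{P}$ respects $\mathcal{P}_\ell$ if it maps every $(\ell)$-equivalence class onto an $(\ell)$-equivalence class; it then induces the permutation $\pi_\ell$ of $\mathcal{P}_\ell$ given by $\pi_\ell(q)=\mathrm{proj}_\ell(\pi(\mathrm{proj}_\ell^{-1}(q)))$.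 $\pi$ is an induced geometric automorphism of $\mathcal{P}_\ell$ if $\pi$ respects $\mathcal{P}_\ell$ and $\pi_\ell$ is a geometric automorphism of $\mathcal{P}_\ell$. *)

theory Defs
  imports "HOL-Analysis.Analysis"
begin

definition geom_aut :: "('a::real_normed_vector) set \<Rightarrow> ('a \<Rightarrow> 'a) \<Rightarrow> bool" where
  "geom_aut Q \<sigma> \<longleftrightarrow> bij_betw \<sigma> Q Q
     \<and> (\<forall>q\<in>Q. norm (\<sigma> q) = norm q)
     \<and> (\<forall>q\<in>Q. \<forall>q'\<in>Q. norm (q - q') = norm (\<sigma> q - \<sigma> q'))"

definition A_mat :: "(real^'n) set \<Rightarrow> (real^'n \<Rightarrow> real^'n) \<Rightarrow> real^'n^'n" where
  "A_mat P \<pi> = (THE A. orthogonal_matrix A \<and> (\<forall>p\<in>P. A *v p = \<pi> p))"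

definition orth_proj :: "(real^'n) set \<Rightarrow> real^'n \<Rightarrow> real^'n" where
  "orth_proj W x = (THE y. y \<in> W \<and> (\<forall>w\<in>W. orthogonal (x - y) w))"

definition equiv_class :: "('a \<Rightarrow> 'b) \<Rightarrow> 'a set \<Rightarrow> 'a set \<Rightarrow> bool" where
  "equiv_class f P \<Delta> \<longleftrightarrow> (\<exists>q\<in>f ` P. \<Delta> = f -` {q} \<inter> P)"

definition respects_proj :: "('a \<Rightarrow> 'b) \<Rightarrow> 'a set \<Rightarrow> ('a \<Rightarrow> 'a) \<Rightarrow> bool" where
  "respects_proj f P \<pi> \<longleftrightarrow> (\<forall>\<Delta>. equiv_class f P \<Delta> \<longrightarrow> equiv_class f P (\<pi> ` \<Delta>))"

definition induced_perm :: "('a \<Rightarrow> 'b) \<Rightarrow> 'a set \<Rightarrow> ('a \<Rightarrow> 'a) \<Rightarrow> 'b \<Rightarrow> 'b" where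
  "induced_perm f P \<pi> q = the_elem (f ` \<pi> ` (f -` {q} \<inter> P))"

definition induced_geom_aut :: "('a \<Rightarrow> 'b::real_normed_vector) \<Rightarrow> 'a set \<Rightarrow> ('a \<Rightarrow> 'a) \<Rightarrow> bool" where
  "induced_geom_aut f P \<pi> \<longleftrightarrow> respects_proj f P \<pi> \<and> geom_aut (f ` P) (induced_perm f P \<pi>)"

end

theory Submission imports Defs begin

lemma orth_inner: fixes A :: "real^'n^'n" shows "orthogonal_matrix A \<Longrightarrow> inner (A *v x) (A *v y) = inner x y"
proof -
  assume "orthogonal_matrix A"
  then have "orthogonal_transformation ((*v) A)"
    using orthogonal_transformation_matrix[of "(*v) A"] by (simp add: matrix_of_matrix_vector_mul matrix_vector_mul_linear)
  then show ?thesis by (simp add: orthogonal_transformation_def)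
qed

lemma orth_surj: "orthogonal_matrix A \<Longrightarrow> A *v (transpose A *v y) = y"
  by (simp add: matrix_vector_mul_assoc orthogonal_matrix_def)

lemma orth_inj: "orthogonal_matrix A \<Longrightarrow> A *v x = A *v y \<Longrightarrow> x = y"
proof -
  assume o: "orthogonal_matrix A" and e: "A *v x = A *v y"
  have "transpose A *v (A *v x) = transpose A *v (A *v y)" using e by simp
  then show ?thesis using o by (simp add: matrix_vector_mul_assoc orthogonal_matrix_def)
qed

lemma polar: "inner x y = (norm x ^2 + norm y ^2 - norm (x - y)^2)/(2::real)"
  for x y :: "'a::real_inner"
  by (simp add: power2_norm_eq_inner inner_diff inner_commute algebra_simps)

lemma gram_sum:
  assumes "finite S" "\<forall>s\<in>S. \<forall>t\<in>S. inner (g s) (g t) = inner s t"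
  shows "inner (\<Sum>s\<in>S. c s *\<^sub>R g s) (\<Sum>t\<in>S. d t *\<^sub>R g t) = inner (\<Sum>s\<in>S. c s *\<^sub>R s) (\<Sum>t\<in>S. d t *\<^sub>R (t::'a::real_inner))"
  using assms by (simp add: inner_sum_left inner_sum_right)

lemma ext_exists:
  fixes P :: "(real^'n) set" and g :: "real^'n \<Rightarrow> real^'n"
  assumes fin: "finite P" and sp: "span P = UNIV" and gr: "\<forall>s\<in>P. \<forall>t\<in>P. inner (g s) (g t) = inner s t"
  shows "\<exists>A. orthogonal_matrix A \<and> (\<forall>p\<in>P. A *v p = g p)"
proof -
  have ex: "\<exists>u. (\<Sum>v\<in>P. u v *\<^sub>R v) = x" for x
  proof -
    have "x \<in> range (\<lambda>u. \<Sum>v\<in>P. u v *\<^sub>R v)" using sp span_finite[OF fin] by simp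
    then show ?thesis by auto
  qed
  define c where "c x = (SOME u. (\<Sum>v\<in>P. u v *\<^sub>R v) = x)" for x
  have c: "(\<Sum>v\<in>P. c x v *\<^sub>R v) = x" for x unfolding c_def by (rule someI_ex[OF ex])
  define f where "f x = (\<Sum>v\<in>P. c x v *\<^sub>R g v)" for x
  have wd: "f x = (\<Sum>v\<in>P. u v *\<^sub>R g v)" if "(\<Sum>v\<in>P. u v *\<^sub>R v) = x" for x u
  proof -
    let ?D = "(\<lambda>v. c x v - u v)"
    have "f x - (\<Sum>v\<in>P. u v *\<^sub>R g v) = (\<Sum>v\<in>P. ?D v *\<^sub>R g v)"
      by (simp add: f_def scaleR_diff_left sum_subtractf)
    moreover have "(\<Sum>v\<in>P. ?D v *\<^sub>R v) = 0"
      using that c[of x] by (simp add: scaleR_diff_left sum_subtractf)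
    ultimately have "inner (f x - (\<Sum>v\<in>P. u v *\<^sub>R g v)) (f x - (\<Sum>v\<in>P. u v *\<^sub>R g v)) = 0"
      using gram_sum[OF fin gr, of ?D ?D] by simp
    then show ?thesis by simp
  qed
  have lin: "linear f"
  proof (rule linearI)
    fix x y
    have "(\<Sum>v\<in>P. (c x v + c y v) *\<^sub>R v) = x + y" using c[of x] c[of y]
      by (simp add: scaleR_add_left sum.distrib)
    from wd[OF this] show "f (x + y) = f x + f y"
      by (simp add: f_def scaleR_add_left sum.distrib)
  next
    fix a x
    have "(\<Sum>v\<in>P. (a * c x v) *\<^sub>R v) = a *\<^sub>R (\<Sum>v\<in>P. c x v *\<^sub>R v)"
      by (simp add: scaleR_sum_right)
    then have "(\<Sum>v\<in>P. (a * c x v) *\<^sub>R v) = a *\<^sub>R x" using c[of x] by simp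
    from wd[OF this] show "f (a *\<^sub>R x) = a *\<^sub>R f x"
      by (simp add: f_def scaleR_sum_right)
  qed
  have nm: "inner (f x) (f y) = inner x y" for x y
    using gram_sum[OF fin gr, of "c x" "c y"] c[of x] c[of y] by (simp add: f_def)
  have ot: "orthogonal_transformation f" using lin nm by (simp add: orthogonal_transformation_def)
  have fp: "f p = g p" if "p \<in> P" for p
  proof -
    have e: "(\<Sum>v\<in>P. (if v = p then 1 else 0) *\<^sub>R h v) = h p" for h :: "real^'n \<Rightarrow> real^'n"
    proof -
      have "(\<Sum>v\<in>P. (if v = p then 1 else 0) *\<^sub>R h v) = (\<Sum>v\<in>P. if v = p then h p else 0)"
        by (rule sum.cong) auto
      also have "\<dots> = h p" using that fin by (simp add: sum.delta)
      finally show ?thesis .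
    qed
    from wd[OF e[of id, simplified]] show ?thesis using e[of g] by simp
  qed
  show ?thesis
    apply (rule exI[of _ "matrix f"])
    using ot lin fp by (simp add: orthogonal_transformation_matrix matrix_works)
qed

lemma A_mat_eq:
  fixes P :: "(real^'n) set"
  assumes sp: "span P = UNIV" and o: "orthogonal_matrix A" and e: "\<forall>p\<in>P. A *v p = g p"
  shows "A_mat P g = A"
  unfolding A_mat_def
proof (rule the_equality)
  show "orthogonal_matrix A \<and> (\<forall>p\<in>P. A *v p = g p)" using o e by simp
next
  fix B assume "orthogonal_matrix B \<and> (\<forall>p\<in>P. B *v p = g p)"
  then have "\<forall>p\<in>P. B *v p = A *v p" using e by simp
  then have "B *v x = A *v x" for x
    using linear_eq_on_span[OF matrix_vector_mul_linear matrix_vector_mul_linear, of P "B" "A" x] sp by auto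
  then show "B = A" by (simp add: matrix_eq)
qed

lemma orth_proj_eq:
  assumes W: "subspace W" and y: "y \<in> W" and o: "\<forall>w\<in>W. orthogonal (x - y) w"
  shows "orth_proj W x = y"
  unfolding orth_proj_def
proof (rule the_equality)
  show "y \<in> W \<and> (\<forall>w\<in>W. orthogonal (x - y) w)" using y o by simp
next
  fix y' assume h: "y' \<in> W \<and> (\<forall>w\<in>W. orthogonal (x - y') w)"
  have d: "y' - y \<in> W" using h y W by (simp add: subspace_diff)
  have "inner (x - y) (y' - y) = 0" "inner (x - y') (y' - y) = 0"
    using o h d by (auto simp: orthogonal_def)
  moreover have "y' - y = (x - y) - (x - y')" by simp
  ultimately have "inner (y' - y) (y' - y) = 0" by (metis inner_diff_left diff_self)
  then show "y' = y" by simp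
qed


context
  fixes W :: "nat \<Rightarrow> (real^'n) set" and r :: nat
  assumes sub: "\<forall>l\<in>{1..r}. subspace (W l)"
    and orth: "\<forall>l\<in>{1..r}. \<forall>m\<in>{1..r}. l \<noteq> m \<longrightarrow> (\<forall>x\<in>W l. \<forall>y\<in>W m. orthogonal x y)"
    and dec: "\<forall>x. \<exists>v. (\<forall>l\<in>{1..r}. v l \<in> W l) \<and> x = (\<Sum>l=1..r. v l)"
begin

lemma orth_rest:
  assumes v: "\<forall>m\<in>{1..r}. v m \<in> W m" and x: "x = (\<Sum>m=1..r. v m)" and l: "l \<in> {1..r}"
    and w: "w \<in> W l"
  shows "orthogonal (x - v l) w"
proof -
  have "x - v l = (\<Sum>m\<in>{1..r}-{l}. v m)" using x l by (simp add: sum.remove)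
  then have "inner (x - v l) w = (\<Sum>m\<in>{1..r}-{l}. inner (v m) w)" by (simp add: inner_sum_left)
  also have "\<dots> = 0"
  proof (rule sum.neutral, rule ballI)
    fix m assume m: "m \<in> {1..r}-{l}"
    then have "m \<in> {1..r}" "m \<noteq> l" by auto
    then show "inner (v m) w = 0" using orth v l w by (simp add: orthogonal_def)
  qed
  finally show ?thesis by (simp add: orthogonal_def)
qed

lemma pr_v:
  assumes v: "\<forall>m\<in>{1..r}. v m \<in> W m" and x: "x = (\<Sum>m=1..r. v m)" and l: "l \<in> {1..r}"
  shows "orth_proj (W l) x = v l"
  using orth_proj_eq[of "W l" "v l" x] sub v l orth_rest[OF v x l] by auto

lemma pr_props:
  assumes l: "l \<in> {1..r}"
  shows "orth_proj (W l) x \<in> W l" "\<forall>w\<in>W l. orthogonal (x - orth_proj (W l) x) w"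
proof -
  obtain v where v: "\<forall>m\<in>{1..r}. v m \<in> W m" and x: "x = (\<Sum>m=1..r. v m)" using dec by blast
  have e: "orth_proj (W l) x = v l" using pr_v[OF v x l] .
  show "orth_proj (W l) x \<in> W l" using e v l by simp
  show "\<forall>w\<in>W l. orthogonal (x - orth_proj (W l) x) w" using e orth_rest[OF v x l] by simp
qed

lemma sum_pr: "x = (\<Sum>m=1..r. orth_proj (W m) x)"
proof -
  obtain v where v: "\<forall>m\<in>{1..r}. v m \<in> W m" and x: "x = (\<Sum>m=1..r. v m)" using dec by blast
  have "(\<Sum>m=1..r. orth_proj (W m) x) = (\<Sum>m=1..r. v m)"
    by (rule sum.cong) (use pr_v[OF v x] in auto)
  then show ?thesis using x by simp
qed

lemma pr_inner_W:
  assumes l: "l \<in> {1..r}" and w: "w \<in> W l"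
  shows "inner x w = inner (orth_proj (W l) x) w"
proof -
  have "inner (x - orth_proj (W l) x) w = 0" using pr_props(2)[OF l] w by (auto simp: orthogonal_def)
  then show ?thesis by (simp add: inner_diff_left)
qed

lemma inner_pr: "inner x y = (\<Sum>l=1..r. inner (orth_proj (W l) x) (orth_proj (W l) y))"
proof -
  have "inner x y = inner (\<Sum>l=1..r. orth_proj (W l) x) y" using sum_pr[of x] by simp
  also have "\<dots> = (\<Sum>l=1..r. inner (orth_proj (W l) x) y)" by (simp add: inner_sum_left)
  also have "\<dots> = (\<Sum>l=1..r. inner (orth_proj (W l) x) (orth_proj (W l) y))"
  proof (rule sum.cong)
    fix l assume l: "l \<in> {1..r}"
    have "inner y (orth_proj (W l) x) = inner (orth_proj (W l) y) (orth_proj (W l) x)"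
      using pr_inner_W[OF l pr_props(1)[OF l]] .
    then show "inner (orth_proj (W l) x) y = inner (orth_proj (W l) x) (orth_proj (W l) y)"
      by (simp add: inner_commute)
  qed simp
  finally show ?thesis .
qed

lemma pr_id:
  assumes l: "l \<in> {1..r}" and w: "w \<in> W l"
  shows "orth_proj (W l) w = w"
  using orth_proj_eq[of "W l" w w] sub l w by (simp add: orthogonal_def)

lemma pr_linear:
  assumes l: "l \<in> {1..r}"
  shows "linear (orth_proj (W l))"
proof (rule linearI)
  fix x y
  show "orth_proj (W l) (x + y) = orth_proj (W l) x + orth_proj (W l) y"
  proof (rule orth_proj_eq)
    show "subspace (W l)" using sub l by simp
    show "orth_proj (W l) x + orth_proj (W l) y \<in> W l"
      using sub l pr_props(1)[OF l] by (simp add: subspace_add)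
    show "\<forall>w\<in>W l. orthogonal (x + y - (orth_proj (W l) x + orth_proj (W l) y)) w"
    proof
      fix w assume "w \<in> W l"
      then have "inner (x - orth_proj (W l) x) w = 0" "inner (y - orth_proj (W l) y) w = 0"
        using pr_props(2)[OF l] by (auto simp: orthogonal_def)
      moreover have "x + y - (orth_proj (W l) x + orth_proj (W l) y) = (x - orth_proj (W l) x) + (y - orth_proj (W l) y)"
        by simp
      ultimately show "orthogonal (x + y - (orth_proj (W l) x + orth_proj (W l) y)) w"
        by (simp add: orthogonal_def inner_add_left inner_diff_left)
    qed
  qed
next
  fix c x
  show "orth_proj (W l) (c *\<^sub>R x) = c *\<^sub>R orth_proj (W l) x"
  proof (rule orth_proj_eq)
    show "subspace (W l)" using sub l by simp
    show "c *\<^sub>R orth_proj (W l) x \<in> W l"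
      using sub l pr_props(1)[OF l] by (simp add: subspace_scale)
    show "\<forall>w\<in>W l. orthogonal (c *\<^sub>R x - c *\<^sub>R orth_proj (W l) x) w"
    proof
      fix w assume "w \<in> W l"
      then have "inner (x - orth_proj (W l) x) w = 0"
        using pr_props(2)[OF l] by (auto simp: orthogonal_def)
      moreover have "c *\<^sub>R x - c *\<^sub>R orth_proj (W l) x = c *\<^sub>R (x - orth_proj (W l) x)"
        by (simp add: scaleR_diff_right)
      ultimately show "orthogonal (c *\<^sub>R x - c *\<^sub>R orth_proj (W l) x) w"
        by (simp add: orthogonal_def)
    qed
  qed
qed

end


lemma lin_fun: "linear (\<lambda>x. inner ((A::real^'n^'n) *v x) w)"
  by (rule linearI) (simp_all add: linear_add[OF matrix_vector_mul_linear] linear_scale[OF matrix_vector_mul_linear] inner_add_left)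

lemma lin_fun2: "linear (\<lambda>x::real^'n. inner x w)"
  by (rule linearI) (simp_all add: inner_add_left)

lemma norm_orth: "orthogonal_matrix A \<Longrightarrow> norm ((A::real^'n^'n) *v x) = norm x"
  by (simp add: norm_eq_sqrt_inner orth_inner)

theorem lemma2:
  fixes P :: "(real^'n) set" and W :: "nat \<Rightarrow> (real^'n) set" and r :: nat
    and \<pi> :: "real^'n \<Rightarrow> real^'n"
  assumes "finite P"
    and "\<forall>p\<in>P. \<forall>i. p $ i \<in> \<rat>"
    and "span P = UNIV"
    and "\<forall>l\<in>{1..r}. subspace (W l)"
    and "\<forall>l\<in>{1..r}. \<forall>m\<in>{1..r}. l \<noteq> m \<longrightarrow> (\<forall>x\<in>W l. \<forall>y\<in>W m. orthogonal x y)"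
    and "\<forall>x. \<exists>v. (\<forall>l\<in>{1..r}. v l \<in> W l) \<and> x = (\<Sum>l=1..r. v l)"
    and "bij_betw \<pi> P P"
  shows "(geom_aut P \<pi> \<and> (\<forall>l\<in>{1..r}. (\<lambda>x. A_mat P \<pi> *v x) ` W l = W l))
     \<longleftrightarrow> (\<forall>l\<in>{1..r}. induced_geom_aut (orth_proj (W l)) P \<pi>)"
proof -
  note fin = assms(1) and sp = assms(3) and bij = assms(7)
  note prp = pr_props[OF assms(4,5,6)] and prid = pr_id[OF assms(4,5,6)]
    and prW = pr_inner_W[OF assms(4,5,6)] and inpr = inner_pr[OF assms(4,5,6)]
    and prlin = pr_linear[OF assms(4,5,6)]
  have sub: "subspace (W l)" if "l \<in> {1..r}" for l using assms(4) that by simp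
  have piP: "\<pi> ` P = P" using bij by (simp add: bij_betw_def)
  have piin: "\<pi> p \<in> P" if "p \<in> P" for p using piP that by blast
  have getA: "orthogonal_matrix (A_mat P \<pi>) \<and> (\<forall>p\<in>P. A_mat P \<pi> *v p = \<pi> p)"
    if gr: "\<forall>s\<in>P. \<forall>t\<in>P. inner (\<pi> s) (\<pi> t) = inner s t"
  proof -
    obtain B where B: "orthogonal_matrix B" "\<forall>p\<in>P. B *v p = \<pi> p"
      using ext_exists[OF fin sp gr] by blast
    then show ?thesis using A_mat_eq[OF sp B] by simp
  qed
  show ?thesis
  proof
    assume L: "geom_aut P \<pi> \<and> (\<forall>l\<in>{1..r}. (\<lambda>x. A_mat P \<pi> *v x) ` W l = W l)"
    define A where "A = A_mat P \<pi>"
    have gr: "\<forall>s\<in>P. \<forall>t\<in>P. inner (\<pi> s) (\<pi> t) = inner s t"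
    proof (intro ballI)
      fix s t assume "s \<in> P" "t \<in> P"
      then have "norm (\<pi> s) = norm s" "norm (\<pi> t) = norm t" "norm (s - t) = norm (\<pi> s - \<pi> t)"
        using L by (auto simp: geom_aut_def)
      then show "inner (\<pi> s) (\<pi> t) = inner s t" by (simp add: polar[of "\<pi> s"] polar[of s])
    qed
    have Ao: "orthogonal_matrix A" and Ap: "\<And>p. p \<in> P \<Longrightarrow> A *v p = \<pi> p"
      using getA[OF gr] by (auto simp: A_def)
    show "\<forall>l\<in>{1..r}. induced_geom_aut (orth_proj (W l)) P \<pi>"
    proof
      fix l assume l: "l \<in> {1..r}"
      let ?pr = "orth_proj (W l)"
      have AW: "(\<lambda>x. A *v x) ` W l = W l" using L l by (simp add: A_def)
      have comm: "?pr (A *v x) = A *v ?pr x" for x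
      proof (rule orth_proj_eq[OF sub[OF l]])
        show "A *v ?pr x \<in> W l" using AW prp(1)[OF l, of x] by blast
        show "\<forall>w\<in>W l. orthogonal (A *v x - A *v ?pr x) w"
        proof
          fix w assume "w \<in> W l"
          then obtain w' where w': "w' \<in> W l" "w = A *v w'" using AW by force
          have "inner (A *v x - A *v ?pr x) w = inner (x - ?pr x) w'"
            using w' Ao by (simp add: orth_inner matrix_vector_mult_diff_distrib[symmetric])
          also have "\<dots> = 0" using prp(2)[OF l] w' by (simp add: orthogonal_def)
          finally show "orthogonal (A *v x - A *v ?pr x) w" by (simp add: orthogonal_def)
        qed
      qed
      have pp: "?pr (\<pi> p) = A *v ?pr p" if "p \<in> P" for p using comm Ap that by metis
      have Ainj: "A *v x = A *v y \<Longrightarrow> x = y" for x y using orth_inj[OF Ao] by blast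
      have Aq: "A *v q \<in> ?pr ` P" if "q \<in> ?pr ` P" for q
        using that pp piin by (auto simp: image_iff) metis
      have cls: "\<pi> ` (?pr -` {q} \<inter> P) = ?pr -` {A *v q} \<inter> P" if q: "q \<in> ?pr ` P" for q
      proof
        show "\<pi> ` (?pr -` {q} \<inter> P) \<subseteq> ?pr -` {A *v q} \<inter> P" using pp piin by auto
        show "?pr -` {A *v q} \<inter> P \<subseteq> \<pi> ` (?pr -` {q} \<inter> P)"
        proof
          fix p' assume p': "p' \<in> ?pr -` {A *v q} \<inter> P"
          then obtain p where p: "p \<in> P" "p' = \<pi> p" using piP by blast
          then have "A *v ?pr p = A *v q" using pp p' by auto
          then have "?pr p = q" using Ainj by blast
          then show "p' \<in> \<pi> ` (?pr -` {q} \<inter> P)" using p by auto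
        qed
      qed
      have resp: "respects_proj ?pr P \<pi>"
        unfolding respects_proj_def equiv_class_def
      proof (intro allI impI)
        fix \<Delta> assume "\<exists>q\<in>?pr ` P. \<Delta> = ?pr -` {q} \<inter> P"
        then obtain q where q: "q \<in> ?pr ` P" "\<Delta> = ?pr -` {q} \<inter> P" by blast
        show "\<exists>q\<in>?pr ` P. \<pi> ` \<Delta> = ?pr -` {q} \<inter> P"
          using cls[OF q(1)] Aq[OF q(1)] q(2) by blast
      qed
      have ind: "induced_perm ?pr P \<pi> q = A *v q" if q: "q \<in> ?pr ` P" for q
      proof -
        have "?pr ` (?pr -` {A *v q} \<inter> P) = {A *v q}" using Aq[OF q] by auto
        then show ?thesis unfolding induced_perm_def using cls[OF q] by simp
      qed
      have bijA: "bij_betw (\<lambda>q. A *v q) (?pr ` P) (?pr ` P)"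
      proof (rule bij_betw_imageI)
        show "inj_on (\<lambda>q. A *v q) (?pr ` P)" using Ainj by (auto simp: inj_on_def)
        show "(\<lambda>q. A *v q) ` ?pr ` P = ?pr ` P"
        proof
          show "(\<lambda>q. A *v q) ` ?pr ` P \<subseteq> ?pr ` P" using Aq by blast
          show "?pr ` P \<subseteq> (\<lambda>q. A *v q) ` ?pr ` P"
          proof
            fix q assume "q \<in> ?pr ` P"
            then obtain p' where p': "p' \<in> P" "q = ?pr p'" by blast
            then obtain p where p: "p \<in> P" "p' = \<pi> p" using piP by blast
            then show "q \<in> (\<lambda>q. A *v q) ` ?pr ` P" using pp p' by auto
          qed
        qed
      qed
      have ga: "geom_aut (?pr ` P) (induced_perm ?pr P \<pi>)"
        unfolding geom_aut_def
      proof (intro conjI ballI)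
        show "bij_betw (induced_perm ?pr P \<pi>) (?pr ` P) (?pr ` P)"
          using bijA bij_betw_cong[of "?pr ` P" "induced_perm ?pr P \<pi>" "\<lambda>q. A *v q"] ind by simp
      next
        fix q assume "q \<in> ?pr ` P"
        then show "norm (induced_perm ?pr P \<pi> q) = norm q" using ind norm_orth[OF Ao] by simp
      next
        fix q q' assume "q \<in> ?pr ` P" "q' \<in> ?pr ` P"
        then show "norm (q - q') = norm (induced_perm ?pr P \<pi> q - induced_perm ?pr P \<pi> q')"
          using ind norm_orth[OF Ao] by (simp add: matrix_vector_mult_diff_distrib[symmetric])
      qed
      show "induced_geom_aut ?pr P \<pi>" using resp ga by (simp add: induced_geom_aut_def)
    qed
  next
    assume R: "\<forall>l\<in>{1..r}. induced_geom_aut (orth_proj (W l)) P \<pi>"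
    have tau: "orth_proj (W l) (\<pi> p) = induced_perm (orth_proj (W l)) P \<pi> (orth_proj (W l) p)"
      if l: "l \<in> {1..r}" and p: "p \<in> P" for l p
    proof -
      let ?pr = "orth_proj (W l)"
      have "respects_proj ?pr P \<pi>" using R l by (simp add: induced_geom_aut_def)
      moreover have "equiv_class ?pr P (?pr -` {?pr p} \<inter> P)" using p by (auto simp: equiv_class_def)
      ultimately have "equiv_class ?pr P (\<pi> ` (?pr -` {?pr p} \<inter> P))"
        by (simp add: respects_proj_def)
      then obtain q where q: "\<pi> ` (?pr -` {?pr p} \<inter> P) = ?pr -` {q} \<inter> P"
        unfolding equiv_class_def by blast
      have hp: "\<pi> p \<in> ?pr -` {q} \<inter> P" using q p by blast
      then have e: "?pr (\<pi> p) = q" by simp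
      have "?pr ` \<pi> ` (?pr -` {?pr p} \<inter> P) = {q}" unfolding q using hp by blast
      then show ?thesis unfolding induced_perm_def using e by simp
    qed
    have taugr: "inner (induced_perm (orth_proj (W l)) P \<pi> q) (induced_perm (orth_proj (W l)) P \<pi> q') = inner q q'"
      if l: "l \<in> {1..r}" and q: "q \<in> orth_proj (W l) ` P" "q' \<in> orth_proj (W l) ` P" for l q q'
    proof -
      have g: "geom_aut (orth_proj (W l) ` P) (induced_perm (orth_proj (W l)) P \<pi>)"
        using R l by (simp add: induced_geom_aut_def)
      then have "norm (induced_perm (orth_proj (W l)) P \<pi> q) = norm q"
        "norm (induced_perm (orth_proj (W l)) P \<pi> q') = norm q'"
        "norm (q - q') = norm (induced_perm (orth_proj (W l)) P \<pi> q - induced_perm (orth_proj (W l)) P \<pi> q')"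
        using q unfolding geom_aut_def by blast+
      then show ?thesis
        by (simp add: polar[of "induced_perm (orth_proj (W l)) P \<pi> q"] polar[of q])
    qed
    have gr: "\<forall>s\<in>P. \<forall>t\<in>P. inner (\<pi> s) (\<pi> t) = inner s t"
    proof (intro ballI)
      fix s t assume st: "s \<in> P" "t \<in> P"
      show "inner (\<pi> s) (\<pi> t) = inner s t"
        unfolding inpr[of "\<pi> s"] inpr[of s]
        by (rule sum.cong) (use st tau taugr in auto)
    qed
    have ga: "geom_aut P \<pi>" unfolding geom_aut_def
    proof (intro conjI ballI)
      show "bij_betw \<pi> P P" by (rule bij)
    next
      fix q assume "q \<in> P" then show "norm (\<pi> q) = norm q" using gr by (simp add: norm_eq_sqrt_inner)
    next
      fix q q' assume "q \<in> P" "q' \<in> P"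
      then show "norm (q - q') = norm (\<pi> q - \<pi> q')" using gr
        by (simp add: norm_eq_sqrt_inner inner_diff_left inner_diff_right)
    qed
    define A where "A = A_mat P \<pi>"
    have Ao: "orthogonal_matrix A" and Ap: "\<And>p. p \<in> P \<Longrightarrow> A *v p = \<pi> p"
      using getA[OF gr] by (auto simp: A_def)
    have AW: "(\<lambda>x. A *v x) ` W l = W l" if l: "l \<in> {1..r}" for l
    proof -
      let ?pr = "orth_proj (W l)"
      let ?tau = "induced_perm ?pr P \<pi>"
      have key: "inner (A *v x) (?pr (\<pi> p)) = inner x (?pr p)" if p: "p \<in> P" for p x
      proof (rule linear_eq_on_span[OF lin_fun lin_fun2, of P])
        fix s assume s: "s \<in> P"
        have "inner (A *v s) (?pr (\<pi> p)) = inner (?pr (\<pi> s)) (?pr (\<pi> p))"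
          using Ap[OF s] prW[OF l prp(1)[OF l]] by simp
        also have "\<dots> = inner (?pr s) (?pr p)" using tau[OF l] taugr[OF l] s p by simp
        also have "\<dots> = inner s (?pr p)" using prW[OF l prp(1)[OF l]] by simp
        finally show "inner (A *v s) (?pr (\<pi> p)) = inner s (?pr p)" .
      qed (simp add: sp)
      have commP: "A *v ?pr p = ?pr (A *v p)" if p: "p \<in> P" for p
      proof -
        define d where "d = ?pr (\<pi> p) - A *v ?pr p"
        define y where "y = transpose A *v d"
        have dy: "A *v y = d" using orth_surj[OF Ao] by (simp add: y_def)
        have "inner d (?pr (\<pi> p)) = inner y (?pr p)" using key[OF p, of y] dy by simp
        also have "\<dots> = inner d (A *v ?pr p)" using orth_inner[OF Ao, of y "?pr p"] dy by simp
        finally have "inner d d = 0" by (simp add: d_def inner_diff_right)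
        then show ?thesis using Ap[OF p] by (simp add: d_def)
      qed
      have commA: "A *v ?pr x = ?pr (A *v x)" for x
      proof (rule linear_eq_on_span[of "\<lambda>x. A *v ?pr x" "\<lambda>x. ?pr (A *v x)" P])
        show "linear (\<lambda>x. A *v ?pr x)"
          using linear_compose[OF prlin[OF l] matrix_vector_mul_linear[of A]] by (simp add: o_def)
        show "linear (\<lambda>x. ?pr (A *v x))"
          using linear_compose[OF matrix_vector_mul_linear[of A] prlin[OF l]] by (simp add: o_def)
      qed (use commP sp in auto)
      show ?thesis
      proof
        show "(\<lambda>x. A *v x) ` W l \<subseteq> W l"
        proof
          fix z assume "z \<in> (\<lambda>x. A *v x) ` W l"
          then obtain w where w: "w \<in> W l" "z = A *v w" by blast
          have "z = A *v ?pr w" using w prid[OF l] by simp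
          also have "\<dots> = ?pr (A *v w)" by (rule commA)
          finally show "z \<in> W l" using prp(1)[OF l] by simp
        qed
        show "W l \<subseteq> (\<lambda>x. A *v x) ` W l"
        proof
          fix w assume w: "w \<in> W l"
          define y where "y = transpose A *v w"
          have "w = ?pr (A *v y)" using orth_surj[OF Ao] prid[OF l w] by (simp add: y_def)
          also have "\<dots> = A *v ?pr y" by (rule commA[symmetric])
          finally show "w \<in> (\<lambda>x. A *v x) ` W l" using prp(1)[OF l, of y] by blast
        qed
      qed
    qed
    show "geom_aut P \<pi> \<and> (\<forall>l\<in>{1..r}. (\<lambda>x. A_mat P \<pi> *v x) ` W l = W l)"
      using ga AW by (simp add: A_def)
  qed
qed

end
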